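(* Let $S$ be a $\Gamma$-semiring with zero having a left unity and a right unity, and let $L$ be its left operator semiring. Then the map $\sigma\mapsto\sigma^{+'}$ is an inclusion preserving bijection from the set $FI(S)$ of fuzzy ideals of $S$ onto the set $FI(L)$ of fuzzy ideals of $L$, and it is an isomorphism of the lattices $(FI(S),\oplus,\cap)$ and $(FI(L),\oplus,\cap)$. Likewise, $\sigma\mapsto\sigma^{+'}$ gives a lattice isomorphism, via an inclusion preserving bijection, between the fuzzy right ideals of $S$ and the fuzzy right ideals of $L$.
   Context: A $\Gamma$-semiring: $S$ and $\Gamma$ are additive commutative semigroups with a map $S\times\Gamma\times S\to S$, $(a,\alpha,b)\mapsto a\alpha b$, such that $(a+b)\alpha c=a\alpha c+b\alpha c$, $a\alpha(b+c)=a\alpha b+a\alpha c$, $a(\alpha+\beta)b=a\alpha b+a\beta b$, $a\alpha(b\beta c)=(a\alpha b)\beta c$. With zero: $(S,+)$, $(\Gamma,+)$ are monoids, $0_S\alpha x=0_S=x\alpha0_S$, $x0_\Gamma y=0_S$. Left operator semiring $L$: $F$ is the free additive commutative semigroup on $S\times\Gamma$; $\sum_i(x_i,\alpha_i)\,\rho\,\sum_j(y_j,\beta_j)$ iff $\sum_ix_i\alpha_ia=\sum_jy_j\beta_ja$ for all $a\in S$; $L=F/\rho$, classes written $\sum_i[x_i,\alpha_i]$, multiplication $(\sum_i[x_i,\alpha_i])(\sum_j[y_j,\beta_j])=\sum_{i,j}[x_i\alpha_iy_j,\beta_j]$; its zero is $[0,\gamma]$. A left unity of $S$ is $\sum_i[e_i,\delta_i]\in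 L$ with $\sum_ie_i\delta_ia=a$ for all $a$; a right unity is a finite family $\gamma_j\in\Gamma,f_j\in S$ with $\sum_ja\gamma_jf_j=a$ for all $a$. Fuzzy subset: map into $[0,1]$. A fuzzy right ideal of $S$: fuzzy subset $\mu$, not identically $0$, with $\mu(x+y)\ge\min[\mu(x),\mu(y)]$ and $\mu(x\gamma y)\ge\mu(x)$ for all $x,y\in S,\gamma\in\Gamma$; a fuzzy left ideal: same with $\mu(x\gamma y)\ge\mu(y)$; a fuzzy ideal: both. For the semiring $L$ analogously with $\mu(pq)\ge\mu(p)$ (right), $\mu(pq)\ge\mu(q)$ (left). Convention: all these fuzzy (left/right) ideals satisfy $\mu(0)=1$. For a fuzzy subset $\sigma$ of $S$: $\sigma^{+'}(\sum_i[x_i,\alpha_i])=\inf_{s\in S}\sigma(\sum_ix_i\alpha_is)$. $(\mu_1\oplus\mu_2)(x)=\sup\{\min[\mu_1(u),\mu_2(v)]:x=u+v\}$; $\cap$ is pointwise minimum; inclusion is pointwise $\le$. *)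

theory Defs
  imports Complex_Main "HOL-Library.Multiset"
begin

text \<open>S is the type 'a, Gamma is the type 'g (both additive commutative monoids);
  op x g y stands for x g y.\<close>

definition gamma_semiring_zero :: "('a::comm_monoid_add \<Rightarrow> 'g::comm_monoid_add \<Rightarrow> 'a \<Rightarrow> 'a) \<Rightarrow> bool" where
  "gamma_semiring_zero op \<longleftrightarrow>
     (\<forall>a b c \<alpha>. op (a + b) \<alpha> c = op a \<alpha> c + op b \<alpha> c) \<and>
     (\<forall>a b c \<alpha>. op a \<alpha> (b + c) = op a \<alpha> b + op a \<alpha> c) \<and>
     (\<forall>a b \<alpha> \<beta>. op a (\<alpha> + \<beta>) b = op a \<alpha> b + op a \<beta> b) \<and>
     (\<forall>a b c \<alpha> \<beta>. op a \<alpha> (op b \<beta> c) = op (op a \<alpha> b) \<beta> c) \<and>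
     (\<forall>x \<alpha>. op 0 \<alpha> x = 0 \<and> op x \<alpha> 0 = 0) \<and>
     (\<forall>x y. op x 0 y = 0)"

text \<open>The free additive commutative semigroup on S x Gamma = nonempty finite multisets.\<close>

definition Fset :: "('a \<times> 'g) multiset set" where
  "Fset = {M. M \<noteq> {#}}"

definition opeval :: "('a::comm_monoid_add \<Rightarrow> 'g \<Rightarrow> 'a \<Rightarrow> 'a) \<Rightarrow> ('a \<times> 'g) multiset \<Rightarrow> 'a \<Rightarrow> 'a" where
  "opeval op M a = (\<Sum>p\<in>#M. op (fst p) (snd p) a)"

definition rho :: "('a::comm_monoid_add \<Rightarrow> 'g \<Rightarrow> 'a \<Rightarrow> 'a) \<Rightarrow> (('a \<times> 'g) multiset \<times> ('a \<times> 'g) multiset) set" where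
  "rho op = {(M, N). M \<in> Fset \<and> N \<in> Fset \<and> (\<forall>a. opeval op M a = opeval op N a)}"

definition Lset :: "('a::comm_monoid_add \<Rightarrow> 'g \<Rightarrow> 'a \<Rightarrow> 'a) \<Rightarrow> ('a \<times> 'g) multiset set set" where
  "Lset op = Fset // rho op"

definition Ladd :: "('a::comm_monoid_add \<Rightarrow> 'g \<Rightarrow> 'a \<Rightarrow> 'a) \<Rightarrow> ('a \<times> 'g) multiset set \<Rightarrow> ('a \<times> 'g) multiset set \<Rightarrow> ('a \<times> 'g) multiset set" where
  "Ladd op P Q = rho op `` {M + N | M N. M \<in> P \<and> N \<in> Q}"

definition mulrep :: "('a::comm_monoid_add \<Rightarrow> 'g \<Rightarrow> 'a \<Rightarrow> 'a) \<Rightarrow> ('a \<times> 'g) multiset \<Rightarrow> ('a \<times> 'g) multiset \<Rightarrow> ('a \<times> 'g) multiset" where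
  "mulrep op M N = (\<Sum>p\<in>#M. image_mset (\<lambda>q. (op (fst p) (snd p) (fst q), snd q)) N)"

definition Lmul :: "('a::comm_monoid_add \<Rightarrow> 'g \<Rightarrow> 'a \<Rightarrow> 'a) \<Rightarrow> ('a \<times> 'g) multiset set \<Rightarrow> ('a \<times> 'g) multiset set \<Rightarrow> ('a \<times> 'g) multiset set" where
  "Lmul op P Q = rho op `` {mulrep op M N | M N. M \<in> P \<and> N \<in> Q}"

definition Lzero :: "('a::comm_monoid_add \<Rightarrow> 'g::comm_monoid_add \<Rightarrow> 'a \<Rightarrow> 'a) \<Rightarrow> ('a \<times> 'g) multiset set" where
  "Lzero op = rho op `` {{#(0, 0)#}}"

definition has_left_unity :: "('a::comm_monoid_add \<Rightarrow> 'g \<Rightarrow> 'a \<Rightarrow> 'a) \<Rightarrow> bool" where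
  "has_left_unity op \<longleftrightarrow> (\<exists>E \<in> Lset op. \<forall>M\<in>E. \<forall>a. opeval op M a = a)"

definition has_right_unity :: "('a::comm_monoid_add \<Rightarrow> 'g \<Rightarrow> 'a \<Rightarrow> 'a) \<Rightarrow> bool" where
  "has_right_unity op \<longleftrightarrow> (\<exists>fs :: ('g \<times> 'a) list. \<forall>a. (\<Sum>p\<leftarrow>fs. op a (fst p) (snd p)) = a)"

definition fuzzy_right_ideal_S :: "('a::comm_monoid_add \<Rightarrow> 'g \<Rightarrow> 'a \<Rightarrow> 'a) \<Rightarrow> ('a \<Rightarrow> real) \<Rightarrow> bool" where
  "fuzzy_right_ideal_S op \<mu> \<longleftrightarrow>
     (\<forall>x. 0 \<le> \<mu> x \<and> \<mu> x \<le> 1) \<and> (\<exists>x. \<mu> x \<noteq> 0) \<and> \<mu> 0 = 1 \<and>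
     (\<forall>x y. \<mu> (x + y) \<ge> min (\<mu> x) (\<mu> y)) \<and>
     (\<forall>x \<gamma> y. \<mu> (op x \<gamma> y) \<ge> \<mu> x)"

definition fuzzy_left_ideal_S :: "('a::comm_monoid_add \<Rightarrow> 'g \<Rightarrow> 'a \<Rightarrow> 'a) \<Rightarrow> ('a \<Rightarrow> real) \<Rightarrow> bool" where
  "fuzzy_left_ideal_S op \<mu> \<longleftrightarrow>
     (\<forall>x. 0 \<le> \<mu> x \<and> \<mu> x \<le> 1) \<and> (\<exists>x. \<mu> x \<noteq> 0) \<and> \<mu> 0 = 1 \<and>
     (\<forall>x y. \<mu> (x + y) \<ge> min (\<mu> x) (\<mu> y)) \<and>
     (\<forall>x \<gamma> y. \<mu> (op x \<gamma> y) \<ge> \<mu> y)"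

definition fuzzy_ideal_S :: "('a::comm_monoid_add \<Rightarrow> 'g \<Rightarrow> 'a \<Rightarrow> 'a) \<Rightarrow> ('a \<Rightarrow> real) \<Rightarrow> bool" where
  "fuzzy_ideal_S op \<mu> \<longleftrightarrow> fuzzy_right_ideal_S op \<mu> \<and> fuzzy_left_ideal_S op \<mu>"

text \<open>Fuzzy subsets of L are functions on the type of classes that vanish outside L.\<close>

definition fuzzy_right_ideal_L :: "('a::comm_monoid_add \<Rightarrow> 'g::comm_monoid_add \<Rightarrow> 'a \<Rightarrow> 'a) \<Rightarrow> (('a \<times> 'g) multiset set \<Rightarrow> real) \<Rightarrow> bool" where
  "fuzzy_right_ideal_L op \<mu> \<longleftrightarrow>
     (\<forall>X. X \<notin> Lset op \<longrightarrow> \<mu> X = 0) \<and>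
     (\<forall>X\<in>Lset op. 0 \<le> \<mu> X \<and> \<mu> X \<le> 1) \<and> (\<exists>X\<in>Lset op. \<mu> X \<noteq> 0) \<and> \<mu> (Lzero op) = 1 \<and>
     (\<forall>X\<in>Lset op. \<forall>Y\<in>Lset op. \<mu> (Ladd op X Y) \<ge> min (\<mu> X) (\<mu> Y)) \<and>
     (\<forall>X\<in>Lset op. \<forall>Y\<in>Lset op. \<mu> (Lmul op X Y) \<ge> \<mu> X)"

definition fuzzy_left_ideal_L :: "('a::comm_monoid_add \<Rightarrow> 'g::comm_monoid_add \<Rightarrow> 'a \<Rightarrow> 'a) \<Rightarrow> (('a \<times> 'g) multiset set \<Rightarrow> real) \<Rightarrow> bool" where
  "fuzzy_left_ideal_L op \<mu> \<longleftrightarrow>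
     (\<forall>X. X \<notin> Lset op \<longrightarrow> \<mu> X = 0) \<and>
     (\<forall>X\<in>Lset op. 0 \<le> \<mu> X \<and> \<mu> X \<le> 1) \<and> (\<exists>X\<in>Lset op. \<mu> X \<noteq> 0) \<and> \<mu> (Lzero op) = 1 \<and>
     (\<forall>X\<in>Lset op. \<forall>Y\<in>Lset op. \<mu> (Ladd op X Y) \<ge> min (\<mu> X) (\<mu> Y)) \<and>
     (\<forall>X\<in>Lset op. \<forall>Y\<in>Lset op. \<mu> (Lmul op X Y) \<ge> \<mu> Y)"

definition fuzzy_ideal_L :: "('a::comm_monoid_add \<Rightarrow> 'g::comm_monoid_add \<Rightarrow> 'a \<Rightarrow> 'a) \<Rightarrow> (('a \<times> 'g) multiset set \<Rightarrow> real) \<Rightarrow> bool" where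
  "fuzzy_ideal_L op \<mu> \<longleftrightarrow> fuzzy_right_ideal_L op \<mu> \<and> fuzzy_left_ideal_L op \<mu>"

definition sigma_plus :: "('a::comm_monoid_add \<Rightarrow> 'g \<Rightarrow> 'a \<Rightarrow> 'a) \<Rightarrow> ('a \<Rightarrow> real) \<Rightarrow> ('a \<times> 'g) multiset set \<Rightarrow> real" where
  "sigma_plus op \<sigma> X = (if X \<in> Lset op then (INF s. \<sigma> (opeval op (SOME M. M \<in> X) s)) else 0)"

definition fsum_S :: "('a::comm_monoid_add \<Rightarrow> real) \<Rightarrow> ('a \<Rightarrow> real) \<Rightarrow> 'a \<Rightarrow> real" where
  "fsum_S \<mu>1 \<mu>2 x = (SUP uv \<in> {(u, v). x = u + v}. min (\<mu>1 (fst uv)) (\<mu>2 (snd uv)))"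

definition fsum_L :: "('a::comm_monoid_add \<Rightarrow> 'g::comm_monoid_add \<Rightarrow> 'a \<Rightarrow> 'a) \<Rightarrow> (('a \<times> 'g) multiset set \<Rightarrow> real) \<Rightarrow> (('a \<times> 'g) multiset set \<Rightarrow> real) \<Rightarrow> ('a \<times> 'g) multiset set \<Rightarrow> real" where
  "fsum_L op \<mu>1 \<mu>2 X = (if X \<in> Lset op then
      (SUP UV \<in> {(U, V). U \<in> Lset op \<and> V \<in> Lset op \<and> X = Ladd op U V}. min (\<mu>1 (fst UV)) (\<mu>2 (snd UV)))
    else 0)"

definition fint :: "('b \<Rightarrow> real) \<Rightarrow> ('b \<Rightarrow> real) \<Rightarrow> 'b \<Rightarrow> real" where
  "fint \<mu>1 \<mu>2 x = min (\<mu>1 x) (\<mu>2 x)"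

end

theory Submission
  imports Defs
begin
locale gsz = fixes op :: "'a::comm_monoid_add \<Rightarrow> 'g::comm_monoid_add \<Rightarrow> 'a \<Rightarrow> 'a"
  assumes G: "gamma_semiring_zero op"
begin
lemma GG: "(\<forall>a b c \<alpha>. op (a + b) \<alpha> c = op a \<alpha> c + op b \<alpha> c) \<and>
     (\<forall>a b c \<alpha>. op a \<alpha> (b + c) = op a \<alpha> b + op a \<alpha> c) \<and>
     (\<forall>a b \<alpha> \<beta>. op a (\<alpha> + \<beta>) b = op a \<alpha> b + op a \<beta> b) \<and>
     (\<forall>a b c \<alpha> \<beta>. op a \<alpha> (op b \<beta> c) = op (op a \<alpha> b) \<beta> c) \<and>
     (\<forall>x \<alpha>. op 0 \<alpha> x = 0 \<and> op x \<alpha> 0 = 0) \<and>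
     (\<forall>x y. op x 0 y = 0)" using G unfolding gamma_semiring_zero_def .
lemma dL: "op (a+b) g c = op a g c + op b g c" by (rule GG[THEN conjunct1, rule_format])
lemma dR: "op a g (b+c) = op a g b + op a g c" by (rule GG[THEN conjunct2, THEN conjunct1, rule_format])
lemma asc: "op a g (op b h c) = op (op a g b) h c" by (rule GG[THEN conjunct2, THEN conjunct2, THEN conjunct2, THEN conjunct1, rule_format])
lemma z1[simp]: "op 0 g x = 0" using GG[THEN conjunct2, THEN conjunct2, THEN conjunct2, THEN conjunct2, THEN conjunct1] by blast
lemma z2[simp]: "op x g 0 = 0" using GG[THEN conjunct2, THEN conjunct2, THEN conjunct2, THEN conjunct2, THEN conjunct1] by blast
lemma z3[simp]: "op x 0 y = 0" using GG[THEN conjunct2, THEN conjunct2, THEN conjunct2, THEN conjunct2, THEN conjunct2] by blast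

lemma opeval_add: "opeval op (M+N) a = opeval op M a + opeval op N a" unfolding opeval_def by simp
lemma op_sum_right: "op a g (\<Sum>q\<in>#N. f q) = (\<Sum>q\<in>#N. op a g (f q))"
  by (induction N) (simp_all add: dR)
lemma op_sum_left: "op (\<Sum>q\<in>#N. f q) g c = (\<Sum>q\<in>#N. op (f q) g c)"
  by (induction N) (simp_all add: dL)
lemma opeval_mulrep: "opeval op (mulrep op M N) s = opeval op M (opeval op N s)"
proof (induction M)
  case empty then show ?case by (simp add: mulrep_def opeval_def)
next
  case (add p M)
  have "opeval op (image_mset (\<lambda>q. (op (fst p) (snd p) (fst q), snd q)) N) s
      = op (fst p) (snd p) (opeval op N s)"
    by (simp add: opeval_def op_sum_right asc image_mset.compositionality comp_def)
  then show ?case using add by (simp add: mulrep_def opeval_add opeval_def)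
qed

definition cls where "cls M = rho op `` {M}"
definition ev where "ev X = opeval op (SOME M. M \<in> X)"
definition sg where "sg a g = cls {#(a,g)#}"
definition Ginv :: "(('a \<times> 'g) multiset set \<Rightarrow> real) \<Rightarrow> 'a \<Rightarrow> real" where "Ginv \<mu> a = (INF g. \<mu> (sg a g))"

lemma mem_cls: "N \<in> cls M \<longleftrightarrow> M \<in> Fset \<and> N \<in> Fset \<and> (\<forall>a. opeval op M a = opeval op N a)"
  by (simp add: cls_def rho_def)
lemma Lset_iff: "X \<in> Lset op \<longleftrightarrow> (\<exists>M\<in>Fset. X = cls M)"
  unfolding Lset_def quotient_def cls_def by simp
lemma cls_eqI: "M\<in>Fset \<Longrightarrow> N\<in>Fset \<Longrightarrow> (\<forall>a. opeval op M a = opeval op N a) \<Longrightarrow> cls M = cls N"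
  by (rule set_eqI) (simp add: mem_cls)
lemma ev_cls: assumes M: "M\<in>Fset" shows "ev (cls M) = opeval op M"
proof -
  define c where "c = (SOME M'. M' \<in> cls M)"
  have "M \<in> cls M" using M by (simp add: mem_cls)
  then have "c \<in> cls M" unfolding c_def by (rule someI)
  then have "\<forall>a. opeval op M a = opeval op c a" unfolding mem_cls by blast
  then show ?thesis unfolding ev_def c_def[symmetric] by auto
qed
lemma cls_Lset: "M\<in>Fset \<Longrightarrow> cls M \<in> Lset op" by (auto simp: Lset_iff)
lemma Lset_ev_eq: "X\<in>Lset op \<Longrightarrow> Y\<in>Lset op \<Longrightarrow> ev X = ev Y \<Longrightarrow> X = Y"
proof -
  assume X: "X\<in>Lset op" and Y: "Y\<in>Lset op" and e: "ev X = ev Y"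
  obtain M where M: "M\<in>Fset" "X = cls M" using X by (auto simp: Lset_iff)
  obtain N where N: "N\<in>Fset" "Y = cls N" using Y by (auto simp: Lset_iff)
  have "opeval op M = opeval op N" using e M N by (simp add: ev_cls)
  then have "cls M = cls N" using M N by (intro cls_eqI) auto
  then show "X = Y" using M N by simp
qed
lemma Fset_add: "M\<in>Fset \<Longrightarrow> M+N \<in> Fset" by (simp add: Fset_def)
lemma Fset_single[simp]: "{#p#} \<in> Fset" by (simp add: Fset_def)
lemma mulrep_Fset: "M\<in>Fset \<Longrightarrow> N\<in>Fset \<Longrightarrow> mulrep op M N \<in> Fset"
proof -
  assume M: "M\<in>Fset" and N: "N\<in>Fset"
  then obtain p M' where "M = add_mset p M'" unfolding Fset_def by (metis multiset_cases mem_Collect_eq)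
  then show ?thesis using N unfolding Fset_def mulrep_def by simp
qed

lemma Image_cls: "Z \<in> rho op `` S \<longleftrightarrow> (\<exists>A\<in>S. Z \<in> cls A)"
  by (auto simp: cls_def)
lemma Ladd_cls: assumes "M\<in>Fset" "N\<in>Fset" shows "Ladd op (cls M) (cls N) = cls (M+N)"
proof (rule set_eqI)
  fix Z
  show "Z \<in> Ladd op (cls M) (cls N) \<longleftrightarrow> Z \<in> cls (M+N)"
  proof
    assume "Z \<in> Ladd op (cls M) (cls N)"
    then obtain M' N' where "M'\<in>cls M" "N'\<in>cls N" "Z \<in> cls (M'+N')"
      unfolding Ladd_def Image_cls by auto
    then have "M'\<in>Fset" "N'\<in>Fset" "Z \<in> Fset" "\<forall>a. opeval op M a = opeval op M' a"
      "\<forall>a. opeval op N a = opeval op N' a" "\<forall>a. opeval op (M'+N') a = opeval op Z a"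
      unfolding mem_cls by blast+
    note prems = this
    have "\<forall>a. opeval op (M+N) a = opeval op Z a"
    proof
      fix a
      have "opeval op (M+N) a = opeval op M a + opeval op N a" by (rule opeval_add)
      also have "\<dots> = opeval op M' a + opeval op N' a" using prems(4,5) by simp
      also have "\<dots> = opeval op Z a" using prems(6) opeval_add[of M' N' a] by simp
      finally show "opeval op (M+N) a = opeval op Z a" .
    qed
    then show "Z \<in> cls (M+N)" unfolding mem_cls using assms Fset_add \<open>Z \<in> Fset\<close> by blast
  next
    assume "Z \<in> cls (M+N)"
    moreover have "M\<in>cls M" "N\<in>cls N" using assms by (auto simp: mem_cls)
    ultimately show "Z \<in> Ladd op (cls M) (cls N)" unfolding Ladd_def Image_cls by auto
  qed
qed
lemma Lmul_cls: assumes "M\<in>Fset" "N\<in>Fset" shows "Lmul op (cls M) (cls N) = cls (mulrep op M N)"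
proof (rule set_eqI)
  fix Z
  show "Z \<in> Lmul op (cls M) (cls N) \<longleftrightarrow> Z \<in> cls (mulrep op M N)"
  proof
    assume "Z \<in> Lmul op (cls M) (cls N)"
    then obtain M' N' where "M'\<in>cls M" "N'\<in>cls N" "Z \<in> cls (mulrep op M' N')"
      unfolding Lmul_def Image_cls by auto
    then have "M'\<in>Fset" "N'\<in>Fset" "Z \<in> Fset" "\<forall>a. opeval op M a = opeval op M' a"
      "\<forall>a. opeval op N a = opeval op N' a" "\<forall>a. opeval op (mulrep op M' N') a = opeval op Z a"
      unfolding mem_cls by blast+
    note prems = this
    have "\<forall>a. opeval op (mulrep op M N) a = opeval op Z a"
    proof
      fix a
      have "opeval op (mulrep op M N) a = opeval op M (opeval op N a)" by (rule opeval_mulrep)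
      also have "\<dots> = opeval op M' (opeval op N' a)" using prems(4,5) by simp
      also have "\<dots> = opeval op Z a" using prems(6) opeval_mulrep[of M' N' a] by simp
      finally show "opeval op (mulrep op M N) a = opeval op Z a" .
    qed
    then show "Z \<in> cls (mulrep op M N)" unfolding mem_cls using assms mulrep_Fset \<open>Z \<in> Fset\<close> by blast
  next
    assume "Z \<in> cls (mulrep op M N)"
    moreover have "M\<in>cls M" "N\<in>cls N" using assms by (auto simp: mem_cls)
    ultimately show "Z \<in> Lmul op (cls M) (cls N)" unfolding Lmul_def Image_cls by auto
  qed
qed

lemma Lzero_cls: "Lzero op = cls {#(0,0)#}" by (simp add: Lzero_def cls_def)

lemma Lset_E: assumes "X\<in>Lset op" obtains M where "M\<in>Fset" "X = cls M" "ev X = opeval op M"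
  using assms by (auto simp: Lset_iff ev_cls)

lemma Ladd_L: assumes "X\<in>Lset op" "Y\<in>Lset op"
  shows "Ladd op X Y \<in> Lset op" "ev (Ladd op X Y) = (\<lambda>s. ev X s + ev Y s)"
proof -
  obtain M where M: "M\<in>Fset" "X = cls M" "ev X = opeval op M" using assms(1) by (rule Lset_E)
  obtain N where N: "N\<in>Fset" "Y = cls N" "ev Y = opeval op N" using assms(2) by (rule Lset_E)
  have e: "Ladd op X Y = cls (M+N)" using M N by (simp add: Ladd_cls)
  show "Ladd op X Y \<in> Lset op" unfolding e using M by (simp add: cls_Lset Fset_add)
  show "ev (Ladd op X Y) = (\<lambda>s. ev X s + ev Y s)" unfolding e using M N
    by (simp add: ev_cls Fset_add opeval_add fun_eq_iff)
qed

lemma Lmul_L: assumes "X\<in>Lset op" "Y\<in>Lset op"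
  shows "Lmul op X Y \<in> Lset op" "ev (Lmul op X Y) = (\<lambda>s. ev X (ev Y s))"
proof -
  obtain M where M: "M\<in>Fset" "X = cls M" "ev X = opeval op M" using assms(1) by (rule Lset_E)
  obtain N where N: "N\<in>Fset" "Y = cls N" "ev Y = opeval op N" using assms(2) by (rule Lset_E)
  have e: "Lmul op X Y = cls (mulrep op M N)" using M N by (simp add: Lmul_cls)
  show "Lmul op X Y \<in> Lset op" unfolding e using M N by (simp add: cls_Lset mulrep_Fset)
  show "ev (Lmul op X Y) = (\<lambda>s. ev X (ev Y s))" unfolding e using M N
    by (simp add: ev_cls mulrep_Fset opeval_mulrep fun_eq_iff)
qed

lemma Lzero_L: "Lzero op \<in> Lset op" "ev (Lzero op) = (\<lambda>s. 0)"
  by (simp_all add: Lzero_cls cls_Lset ev_cls opeval_def fun_eq_iff)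

lemma sg_L: "sg a g \<in> Lset op" "ev (sg a g) = op a g"
  by (simp_all add: sg_def cls_Lset ev_cls opeval_def fun_eq_iff)

lemma ev_op: assumes "X\<in>Lset op" shows "ev X (op e d s) = op (ev X e) d s"
proof -
  obtain M where M: "M\<in>Fset" "X = cls M" "ev X = opeval op M" using assms by (rule Lset_E)
  show ?thesis using M by (simp add: opeval_def op_sum_left asc)
qed

lemma ev_plus: assumes "X\<in>Lset op" shows "ev X (a+b) = ev X a + ev X b" "ev X 0 = 0"
proof -
  obtain M where M: "M\<in>Fset" "X = cls M" "ev X = opeval op M" using assms by (rule Lset_E)
  show "ev X (a+b) = ev X a + ev X b" using M by (simp add: opeval_def dR sum_mset.distrib)
  show "ev X 0 = 0" using M by (simp add: opeval_def)
qed

lemma ev_summ: assumes "X\<in>Lset op" shows "ev X (\<Sum>p\<in>#N. f p) = (\<Sum>p\<in>#N. ev X (f p))"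
  by (induction N) (simp_all add: ev_plus[OF assms])

lemma img_Fset: "ME \<in> Fset \<Longrightarrow> image_mset (\<lambda>p. (f p, snd p)) ME \<in> Fset"
  by (simp add: Fset_def)

lemma ev_img: "ME \<in> Fset \<Longrightarrow> ev (cls (image_mset (\<lambda>p. (f p, snd p)) ME)) = (\<lambda>s. \<Sum>p\<in>#ME. op (f p) (snd p) s)"
  by (simp add: img_Fset ev_cls opeval_def multiset.map_comp comp_def fun_eq_iff)
end

context gsz begin

lemma fz_summ:
  assumes ad: "\<And>x y. min (\<sigma> x) (\<sigma> y) \<le> \<sigma> (x+y)" and z: "\<sigma> 0 = (1::real)" and t: "t \<le> 1"
    and h: "\<forall>x\<in>#N. t \<le> \<sigma> (f x)"
  shows "t \<le> \<sigma> (\<Sum>x\<in>#N. f x)"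
  using h
proof (induction N)
  case empty then show ?case using z t by simp
next
  case (add x N)
  then have "t \<le> \<sigma> (f x)" "t \<le> \<sigma> (\<Sum>x\<in>#N. f x)" by auto
  then have "t \<le> min (\<sigma> (f x)) (\<sigma> (\<Sum>x\<in>#N. f x))" by simp
  also have "\<dots> \<le> \<sigma> (f x + (\<Sum>x\<in>#N. f x))" by (rule ad)
  finally show ?case by simp
qed

lemma fz_sumlist:
  assumes add: "\<And>x y. min (\<sigma> x) (\<sigma> y) \<le> \<sigma> (x+y)" and z: "\<sigma> 0 = (1::real)" and t: "t \<le> 1"
    and h: "\<forall>x\<in>set xs. t \<le> \<sigma> (f x)"
  shows "t \<le> \<sigma> (\<Sum>x\<leftarrow>xs. f x)"
  using h
proof (induction xs)
  case Nil then show ?case using z t by simp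
next
  case (Cons x xs)
  then have "t \<le> \<sigma> (f x)" "t \<le> \<sigma> (\<Sum>x\<leftarrow>xs. f x)" by auto
  then have "t \<le> min (\<sigma> (f x)) (\<sigma> (\<Sum>x\<leftarrow>xs. f x))" by simp
  also have "\<dots> \<le> \<sigma> (f x + (\<Sum>x\<leftarrow>xs. f x))" by (rule add)
  finally show ?case by simp
qed

lemma sp_eq: "X \<in> Lset op \<Longrightarrow> sigma_plus op \<sigma> X = (INF s. \<sigma> (ev X s))"
  by (simp add: sigma_plus_def ev_def)

lemma sp_out: "X \<notin> Lset op \<Longrightarrow> sigma_plus op \<sigma> X = 0"
  by (simp add: sigma_plus_def)

lemma sp_lower: assumes "\<And>x. 0 \<le> \<sigma> x" "X \<in> Lset op" shows "sigma_plus op \<sigma> X \<le> \<sigma> (ev X s)"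
  unfolding sp_eq[OF assms(2)] by (rule cINF_lower) (auto intro!: bdd_belowI[of _ 0] assms(1))

lemma sp_greatest: assumes "X \<in> Lset op" "\<And>s. t \<le> \<sigma> (ev X s)" shows "t \<le> sigma_plus op \<sigma> X"
  unfolding sp_eq[OF assms(1)] by (rule cINF_greatest) (auto intro: assms(2))

definition fzb :: "('a \<Rightarrow> real) \<Rightarrow> bool" where
  "fzb \<sigma> \<longleftrightarrow> (\<forall>x. 0 \<le> \<sigma> x \<and> \<sigma> x \<le> 1) \<and> \<sigma> 0 = 1 \<and> (\<forall>x y. min (\<sigma> x) (\<sigma> y) \<le> \<sigma> (x+y))"

lemma fzb_right: "fuzzy_right_ideal_S op \<sigma> \<Longrightarrow> fzb \<sigma>"
  by (simp add: fuzzy_right_ideal_S_def fzb_def)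
lemma fzb_left: "fuzzy_left_ideal_S op \<sigma> \<Longrightarrow> fzb \<sigma>"
  by (simp add: fuzzy_left_ideal_S_def fzb_def)

lemma base_L:
  assumes "fzb \<sigma>"
  shows "(\<forall>X. X \<notin> Lset op \<longrightarrow> sigma_plus op \<sigma> X = 0) \<and>
     (\<forall>X\<in>Lset op. 0 \<le> sigma_plus op \<sigma> X \<and> sigma_plus op \<sigma> X \<le> 1) \<and>
     (\<exists>X\<in>Lset op. sigma_plus op \<sigma> X \<noteq> 0) \<and> sigma_plus op \<sigma> (Lzero op) = 1 \<and>
     (\<forall>X\<in>Lset op. \<forall>Y\<in>Lset op. sigma_plus op \<sigma> (Ladd op X Y) \<ge> min (sigma_plus op \<sigma> X) (sigma_plus op \<sigma> Y))"
proof -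
  have b: "\<And>x. 0 \<le> \<sigma> x" "\<And>x. \<sigma> x \<le> 1" "\<sigma> 0 = 1" "\<And>x y. min (\<sigma> x) (\<sigma> y) \<le> \<sigma> (x+y)"
    using assms by (auto simp: fzb_def)
  have r01: "0 \<le> sigma_plus op \<sigma> X \<and> sigma_plus op \<sigma> X \<le> 1" if X: "X \<in> Lset op" for X
  proof
    show "0 \<le> sigma_plus op \<sigma> X" by (rule sp_greatest[OF X]) (rule b(1))
    have "sigma_plus op \<sigma> X \<le> \<sigma> (ev X 0)" by (rule sp_lower[OF b(1) X])
    then show "sigma_plus op \<sigma> X \<le> 1" using ev_plus(2)[OF X] b(3) by simp
  qed
  have z: "sigma_plus op \<sigma> (Lzero op) = 1"
  proof (rule antisym)
    show "sigma_plus op \<sigma> (Lzero op) \<le> 1" using r01[OF Lzero_L(1)] by simp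
    show "1 \<le> sigma_plus op \<sigma> (Lzero op)" by (rule sp_greatest[OF Lzero_L(1)]) (simp add: Lzero_L(2) b(3))
  qed
  have ad: "sigma_plus op \<sigma> (Ladd op X Y) \<ge> min (sigma_plus op \<sigma> X) (sigma_plus op \<sigma> Y)"
    if X: "X \<in> Lset op" and Y: "Y \<in> Lset op" for X Y
  proof (rule sp_greatest[OF Ladd_L(1)[OF X Y]])
    fix s
    have "min (sigma_plus op \<sigma> X) (sigma_plus op \<sigma> Y) \<le> min (\<sigma> (ev X s)) (\<sigma> (ev Y s))"
      using sp_lower[OF b(1) X] sp_lower[OF b(1) Y] by (rule min.mono)
    also have "\<dots> \<le> \<sigma> (ev X s + ev Y s)" by (rule b(4))
    finally show "min (sigma_plus op \<sigma> X) (sigma_plus op \<sigma> Y) \<le> \<sigma> (ev (Ladd op X Y) s)"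
      by (simp add: Ladd_L(2)[OF X Y])
  qed
  have ex: "\<exists>X\<in>Lset op. sigma_plus op \<sigma> X \<noteq> 0" using z Lzero_L(1) by force
  show ?thesis using r01 z ad ex by (auto simp: sp_out)
qed

lemma right_S_L: assumes "fuzzy_right_ideal_S op \<sigma>" shows "fuzzy_right_ideal_L op (sigma_plus op \<sigma>)"
proof -
  have b: "\<And>x. 0 \<le> \<sigma> x" "\<And>x g y. \<sigma> x \<le> \<sigma> (op x g y)" using assms by (auto simp: fuzzy_right_ideal_S_def)
  have m: "sigma_plus op \<sigma> (Lmul op X Y) \<ge> sigma_plus op \<sigma> X" if X: "X \<in> Lset op" and Y: "Y \<in> Lset op" for X Y
  proof (rule sp_greatest[OF Lmul_L(1)[OF X Y]])
    fix s show "sigma_plus op \<sigma> X \<le> \<sigma> (ev (Lmul op X Y) s)"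
      unfolding Lmul_L(2)[OF X Y] by (rule sp_lower[OF b(1) X])
  qed
  show ?thesis using base_L[OF fzb_right[OF assms]] m unfolding fuzzy_right_ideal_L_def by blast
qed

lemma left_ev: assumes "fuzzy_left_ideal_S op \<sigma>" "X \<in> Lset op" shows "\<sigma> t \<le> \<sigma> (ev X t)"
proof -
  obtain M where M: "M\<in>Fset" "X = cls M" "ev X = opeval op M" using assms(2) by (rule Lset_E)
  have b: "\<And>x y. min (\<sigma> x) (\<sigma> y) \<le> \<sigma> (x+y)" "\<sigma> 0 = 1" "\<sigma> t \<le> 1" "\<And>x g y. \<sigma> y \<le> \<sigma> (op x g y)"
    using assms(1) by (auto simp: fuzzy_left_ideal_S_def)
  have "\<sigma> t \<le> \<sigma> (\<Sum>p\<in>#M. op (fst p) (snd p) t)"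
    by (rule fz_summ[OF b(1-3)]) (auto intro: b(4))
  then show ?thesis using M by (simp add: opeval_def)
qed

lemma left_S_L: assumes "fuzzy_left_ideal_S op \<sigma>" shows "fuzzy_left_ideal_L op (sigma_plus op \<sigma>)"
proof -
  have b: "\<And>x. 0 \<le> \<sigma> x" using assms by (auto simp: fuzzy_left_ideal_S_def)
  have m: "sigma_plus op \<sigma> (Lmul op X Y) \<ge> sigma_plus op \<sigma> Y" if X: "X \<in> Lset op" and Y: "Y \<in> Lset op" for X Y
  proof (rule sp_greatest[OF Lmul_L(1)[OF X Y]])
    fix s
    have "sigma_plus op \<sigma> Y \<le> \<sigma> (ev Y s)" by (rule sp_lower[OF b(1) Y])
    also have "\<dots> \<le> \<sigma> (ev X (ev Y s))" by (rule left_ev[OF assms X])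
    finally show "sigma_plus op \<sigma> Y \<le> \<sigma> (ev (Lmul op X Y) s)"
      unfolding Lmul_L(2)[OF X Y] .
  qed
  show ?thesis using base_L[OF fzb_left[OF assms]] m unfolding fuzzy_left_ideal_L_def by blast
qed

end

context gsz begin

lemma L_b: assumes "fuzzy_right_ideal_L op \<mu>"
  shows "\<And>X. X \<notin> Lset op \<Longrightarrow> \<mu> X = 0" "\<And>X. X \<in> Lset op \<Longrightarrow> 0 \<le> \<mu> X"
    "\<And>X. X \<in> Lset op \<Longrightarrow> \<mu> X \<le> 1" "\<mu> (Lzero op) = 1"
    "\<And>X Y. X \<in> Lset op \<Longrightarrow> Y \<in> Lset op \<Longrightarrow> min (\<mu> X) (\<mu> Y) \<le> \<mu> (Ladd op X Y)"
    "\<And>X Y. X \<in> Lset op \<Longrightarrow> Y \<in> Lset op \<Longrightarrow> \<mu> X \<le> \<mu> (Lmul op X Y)"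
  using assms unfolding fuzzy_right_ideal_L_def by blast+

lemma gi_lower: assumes "fuzzy_right_ideal_L op \<mu>" shows "Ginv \<mu> a \<le> \<mu> (sg a g)"
  unfolding Ginv_def by (rule cINF_lower) (auto intro!: bdd_belowI[of _ 0] L_b(2)[OF assms] sg_L(1))

lemma gi_greatest: "(\<And>g. t \<le> \<mu> (sg a g)) \<Longrightarrow> t \<le> Ginv \<mu> a"
  unfolding Ginv_def by (rule cINF_greatest) auto

lemma sg_zero: "sg 0 g = Lzero op"
  by (rule Lset_ev_eq[OF sg_L(1) Lzero_L(1)]) (simp add: sg_L(2) Lzero_L(2) fun_eq_iff)

lemma sg_add: "sg (a+b) g = Ladd op (sg a g) (sg b g)"
  by (rule Lset_ev_eq[OF sg_L(1) Ladd_L(1)[OF sg_L(1) sg_L(1)]])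
     (simp add: sg_L(2) Ladd_L(2)[OF sg_L(1) sg_L(1)] fun_eq_iff dL)

lemma sg_mul: "sg (op a g b) d = Lmul op (sg a g) (sg b d)"
  by (rule Lset_ev_eq[OF sg_L(1) Lmul_L(1)[OF sg_L(1) sg_L(1)]])
     (simp add: sg_L(2) Lmul_L(2)[OF sg_L(1) sg_L(1)] fun_eq_iff asc)

lemma sg_ev: "X \<in> Lset op \<Longrightarrow> sg (ev X s) g = Lmul op X (sg s g)"
  by (rule Lset_ev_eq[OF sg_L(1) Lmul_L(1)[OF _ sg_L(1)]])
     (simp_all add: sg_L(2) Lmul_L(2)[OF _ sg_L(1)] fun_eq_iff ev_op)

lemma cls_single: "cls {#q#} = sg (fst q) (snd q)"
  by (simp add: sg_def)

lemma mu_cls: assumes mu: "fuzzy_right_ideal_L op \<mu>"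
  shows "N \<in> Fset \<Longrightarrow> (\<forall>q\<in>#N. t \<le> \<mu> (sg (fst q) (snd q))) \<Longrightarrow> t \<le> \<mu> (cls N)"
proof (induction N)
  case empty then show ?case by (simp add: Fset_def)
next
  case (add q N)
  show ?case
  proof (cases "N = {#}")
    case True then show ?thesis using add.prems by (simp add: cls_single)
  next
    case False
    then have NF: "N \<in> Fset" by (simp add: Fset_def)
    have e: "cls (add_mset q N) = Ladd op (cls {#q#}) (cls N)"
      using Ladd_cls[OF Fset_single NF, of q] by simp
    have "t \<le> \<mu> (cls {#q#})" using add.prems by (simp add: cls_single)
    moreover have "t \<le> \<mu> (cls N)" using add.IH NF add.prems by simp
    ultimately have "t \<le> min (\<mu> (cls {#q#})) (\<mu> (cls N))" by simp
    also have "\<dots> \<le> \<mu> (Ladd op (cls {#q#}) (cls N))"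
      by (rule L_b(5)[OF mu cls_Lset[OF Fset_single] cls_Lset[OF NF]])
    finally show ?thesis unfolding e .
  qed
qed

lemma Ginv_right: assumes mu: "fuzzy_right_ideal_L op \<mu>" shows "fuzzy_right_ideal_S op (Ginv \<mu>)"
proof -
  note b = L_b[OF mu]
  have r0: "0 \<le> Ginv \<mu> x" for x by (rule gi_greatest) (rule b(2)[OF sg_L(1)])
  have r1: "Ginv \<mu> x \<le> 1" for x using gi_lower[OF mu, of x 0] b(3)[OF sg_L(1)[of x 0]] by linarith
  have z: "Ginv \<mu> 0 = 1" using r1[of 0] gi_greatest[of 1 \<mu> 0] by (simp add: sg_zero b(4))
  have ad: "min (Ginv \<mu> x) (Ginv \<mu> y) \<le> Ginv \<mu> (x+y)" for x y
  proof (rule gi_greatest)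
    fix g
    have "min (Ginv \<mu> x) (Ginv \<mu> y) \<le> min (\<mu> (sg x g)) (\<mu> (sg y g))"
      using gi_lower[OF mu, of x g] gi_lower[OF mu, of y g] by (rule min.mono)
    also have "\<dots> \<le> \<mu> (sg (x+y) g)" unfolding sg_add by (rule b(5)[OF sg_L(1) sg_L(1)])
    finally show "min (Ginv \<mu> x) (Ginv \<mu> y) \<le> \<mu> (sg (x+y) g)" .
  qed
  have m: "Ginv \<mu> x \<le> Ginv \<mu> (op x g y)" for x g y
  proof (rule gi_greatest)
    fix d
    have "Ginv \<mu> x \<le> \<mu> (sg x g)" by (rule gi_lower[OF mu])
    also have "\<dots> \<le> \<mu> (sg (op x g y) d)" unfolding sg_mul by (rule b(6)[OF sg_L(1) sg_L(1)])
    finally show "Ginv \<mu> x \<le> \<mu> (sg (op x g y) d)" .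
  qed
  have ex: "\<exists>x. Ginv \<mu> x \<noteq> 0" using z by (intro exI[of _ 0]) simp
  show ?thesis unfolding fuzzy_right_ideal_S_def using r0 r1 z ad m ex by blast
qed

lemma Ginv_left: assumes mu: "fuzzy_right_ideal_L op \<mu>" and mul: "fuzzy_left_ideal_L op \<mu>"
  shows "fuzzy_left_ideal_S op (Ginv \<mu>)"
proof -
  have R: "fuzzy_right_ideal_S op (Ginv \<mu>)" by (rule Ginv_right[OF mu])
  have ml: "\<And>X Y. X \<in> Lset op \<Longrightarrow> Y \<in> Lset op \<Longrightarrow> \<mu> Y \<le> \<mu> (Lmul op X Y)"
    using mul unfolding fuzzy_left_ideal_L_def by blast
  have m: "Ginv \<mu> y \<le> Ginv \<mu> (op x g y)" for x g y
  proof (rule gi_greatest)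
    fix d
    have "Ginv \<mu> y \<le> \<mu> (sg y d)" by (rule gi_lower[OF mu])
    also have "\<dots> \<le> \<mu> (sg (op x g y) d)" unfolding sg_mul by (rule ml[OF sg_L(1) sg_L(1)])
    finally show "Ginv \<mu> y \<le> \<mu> (sg (op x g y) d)" .
  qed
  show ?thesis using R m unfolding fuzzy_right_ideal_S_def fuzzy_left_ideal_S_def by blast
qed

lemma Ginv_mono: assumes "fuzzy_right_ideal_L op \<mu>1" "\<mu>1 \<le> \<mu>2" shows "Ginv \<mu>1 \<le> Ginv \<mu>2"
proof (rule le_funI, rule gi_greatest)
  fix a g
  show "Ginv \<mu>1 a \<le> \<mu>2 (sg a g)" by (rule order_trans[OF gi_lower[OF assms(1), of a g] le_funD[OF assms(2)]])
qed

end

context gsz begin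

lemma Ginv_sp: assumes R: "fuzzy_right_ideal_S op \<sigma>" and fs: "\<And>a. (\<Sum>p\<leftarrow>fs. op a (fst p) (snd p)) = a"
  shows "Ginv (sigma_plus op \<sigma>) = \<sigma>"
proof
  fix a
  have RL: "fuzzy_right_ideal_L op (sigma_plus op \<sigma>)" by (rule right_S_L[OF R])
  have b: "\<And>x. 0 \<le> \<sigma> x" "\<And>x g y. \<sigma> x \<le> \<sigma> (op x g y)" "\<And>x y. min (\<sigma> x) (\<sigma> y) \<le> \<sigma> (x+y)" "\<sigma> 0 = 1"
    using R by (auto simp: fuzzy_right_ideal_S_def)
  let ?t = "Ginv (sigma_plus op \<sigma>) a"
  show "?t = \<sigma> a"
  proof (rule antisym)
    have t1: "?t \<le> 1" using gi_lower[OF RL, of a 0] L_b(3)[OF RL sg_L(1)[of a 0]] by linarith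
    have "?t \<le> \<sigma> (\<Sum>p\<leftarrow>fs. op a (fst p) (snd p))"
    proof (rule fz_sumlist[OF b(3) b(4) t1], rule ballI)
      fix p :: "'g \<times> 'a"
      have "?t \<le> sigma_plus op \<sigma> (sg a (fst p))" by (rule gi_lower[OF RL])
      also have "\<dots> \<le> \<sigma> (ev (sg a (fst p)) (snd p))" by (rule sp_lower[OF b(1) sg_L(1)])
      finally show "?t \<le> \<sigma> (op a (fst p) (snd p))" by (simp add: sg_L(2))
    qed
    then show "?t \<le> \<sigma> a" by (simp add: fs)
    show "\<sigma> a \<le> ?t"
    proof (rule gi_greatest, rule sp_greatest[OF sg_L(1)])
      fix g s show "\<sigma> a \<le> \<sigma> (ev (sg a g) s)" by (simp add: sg_L(2) b(2))
    qed
  qed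
qed

lemma sp_mono: assumes "\<And>x. 0 \<le> \<sigma>1 x" "\<sigma>1 \<le> \<sigma>2" shows "sigma_plus op \<sigma>1 \<le> sigma_plus op \<sigma>2"
proof (rule le_funI)
  fix X show "sigma_plus op \<sigma>1 X \<le> sigma_plus op \<sigma>2 X"
  proof (cases "X \<in> Lset op")
    case False then show ?thesis by (simp add: sp_out)
  next
    case X: True
    show ?thesis
    proof (rule sp_greatest[OF X])
      fix s show "sigma_plus op \<sigma>1 X \<le> \<sigma>2 (ev X s)"
        by (rule order_trans[OF sp_lower[OF assms(1) X] le_funD[OF assms(2)]])
    qed
  qed
qed

lemma sp_fint: assumes "\<And>x. 0 \<le> \<sigma>1 x" "\<And>x. 0 \<le> \<sigma>2 x"
  shows "sigma_plus op (fint \<sigma>1 \<sigma>2) = fint (sigma_plus op \<sigma>1) (sigma_plus op \<sigma>2)"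
proof
  fix X
  have f0: "\<And>x. 0 \<le> fint \<sigma>1 \<sigma>2 x" using assms by (simp add: fint_def)
  show "sigma_plus op (fint \<sigma>1 \<sigma>2) X = fint (sigma_plus op \<sigma>1) (sigma_plus op \<sigma>2) X"
  proof (cases "X \<in> Lset op")
    case False then show ?thesis by (simp add: sp_out fint_def)
  next
    case X: True
    have l1: "sigma_plus op (fint \<sigma>1 \<sigma>2) X \<le> sigma_plus op \<sigma>1 X"
    proof (rule sp_greatest[OF X])
      fix s show "sigma_plus op (fint \<sigma>1 \<sigma>2) X \<le> \<sigma>1 (ev X s)"
        by (rule order_trans[OF sp_lower[OF f0 X, where s=s]]) (simp add: fint_def)
    qed
    have l2: "sigma_plus op (fint \<sigma>1 \<sigma>2) X \<le> sigma_plus op \<sigma>2 X"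
    proof (rule sp_greatest[OF X])
      fix s show "sigma_plus op (fint \<sigma>1 \<sigma>2) X \<le> \<sigma>2 (ev X s)"
        by (rule order_trans[OF sp_lower[OF f0 X, where s=s]]) (simp add: fint_def)
    qed
    have l3: "min (sigma_plus op \<sigma>1 X) (sigma_plus op \<sigma>2 X) \<le> sigma_plus op (fint \<sigma>1 \<sigma>2) X"
    proof (rule sp_greatest[OF X])
      fix s show "min (sigma_plus op \<sigma>1 X) (sigma_plus op \<sigma>2 X) \<le> fint \<sigma>1 \<sigma>2 (ev X s)"
        unfolding fint_def using sp_lower[OF assms(1) X, where s=s] sp_lower[OF assms(2) X, where s=s] by (rule min.mono)
    qed
    show ?thesis using l1 l2 l3 by (simp add: fint_def)
  qed
qed

end

locale gszu = gsz op for op :: "'a::comm_monoid_add \<Rightarrow> 'g::comm_monoid_add \<Rightarrow> 'a \<Rightarrow> 'a" +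
  fixes ME :: "('a \<times> 'g) multiset"
  assumes ME: "ME \<in> Fset" "\<And>a. opeval op ME a = a"
begin

lemma decomp: assumes X: "X\<in>Lset op"
  shows "X = cls (image_mset (\<lambda>p. (ev X (fst p), snd p)) ME)"
proof (rule Lset_ev_eq[OF X])
  show "cls (image_mset (\<lambda>p. (ev X (fst p), snd p)) ME) \<in> Lset op" by (simp add: img_Fset ME cls_Lset)
  have "ev X s = (\<Sum>p\<in>#ME. op (ev X (fst p)) (snd p) s)" for s
  proof -
    have "ev X s = ev X (opeval op ME s)" by (simp add: ME)
    also have "\<dots> = (\<Sum>p\<in>#ME. ev X (op (fst p) (snd p) s))" unfolding opeval_def by (rule ev_summ[OF X])
    also have "\<dots> = (\<Sum>p\<in>#ME. op (ev X (fst p)) (snd p) s)" by (simp add: ev_op[OF X])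
    finally show ?thesis .
  qed
  then have "ev X = (\<lambda>s. \<Sum>p\<in>#ME. op (ev X (fst p)) (snd p) s)" by (intro ext)
  also have "\<dots> = ev (cls (image_mset (\<lambda>p. (ev X (fst p), snd p)) ME))"
    by (rule ev_img[OF ME(1), symmetric])
  finally show "ev X = ev (cls (image_mset (\<lambda>p. (ev X (fst p), snd p)) ME))" .
qed

lemma sp_Ginv: assumes mu: "fuzzy_right_ideal_L op \<mu>" shows "sigma_plus op (Ginv \<mu>) = \<mu>"
proof
  fix X
  note b = L_b[OF mu]
  have g0: "\<And>x. 0 \<le> Ginv \<mu> x" using Ginv_right[OF mu] by (simp add: fuzzy_right_ideal_S_def)
  show "sigma_plus op (Ginv \<mu>) X = \<mu> X"
  proof (cases "X \<in> Lset op")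
    case False then show ?thesis by (simp add: sp_out b(1))
  next
    case X: True
    show ?thesis
    proof (rule antisym)
      show "\<mu> X \<le> sigma_plus op (Ginv \<mu>) X"
      proof (rule sp_greatest[OF X], rule gi_greatest)
        fix s g show "\<mu> X \<le> \<mu> (sg (ev X s) g)" unfolding sg_ev[OF X] by (rule b(6)[OF X sg_L(1)])
      qed
      let ?t = "sigma_plus op (Ginv \<mu>) X"
      let ?N = "image_mset (\<lambda>p. (ev X (fst p), snd p)) ME"
      have "?t \<le> \<mu> (cls ?N)"
      proof (rule mu_cls[OF mu img_Fset[OF ME(1)]], rule ballI)
        fix q assume "q \<in># ?N"
        then obtain p where q: "q = (ev X (fst p), snd p)" by auto
        have "?t \<le> Ginv \<mu> (ev X (fst p))" by (rule sp_lower[OF g0 X])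
        also have "\<dots> \<le> \<mu> (sg (ev X (fst p)) (snd p))" by (rule gi_lower[OF mu])
        finally show "?t \<le> \<mu> (sg (fst q) (snd q))" using q by simp
      qed
      then show "?t \<le> \<mu> X" using decomp[OF X] by simp
    qed
  qed
qed


lemma tau_upper: assumes "\<And>x. \<sigma>1 x \<le> 1" "x = u + v"
  shows "min (\<sigma>1 u) (\<sigma>2 v) \<le> fsum_S \<sigma>1 \<sigma>2 x"
proof -
  have m: "(u,v) \<in> {(u, v). x = u + v}" using assms(2) by simp
  have "min (\<sigma>1 (fst (u,v))) (\<sigma>2 (snd (u,v))) \<le> (SUP uv \<in> {(u, v). x = u + v}. min (\<sigma>1 (fst uv)) (\<sigma>2 (snd uv)))"
    by (rule cSUP_upper[OF m]) (use assms(1) in \<open>auto intro!: bdd_aboveI[of _ 1] simp: min_le_iff_disj\<close>)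
  then show ?thesis by (simp add: fsum_S_def)
qed

lemma tau_le1: assumes "\<And>x. \<sigma>1 x \<le> 1" shows "fsum_S \<sigma>1 \<sigma>2 x \<le> 1"
proof -
  have "(x, 0) \<in> {(u, v). x = u + v}" by simp
  then have ne: "{(u, v). x = u + v} \<noteq> {}" by blast
  show ?thesis unfolding fsum_S_def
    by (rule cSUP_least[OF ne]) (use assms in \<open>auto simp: min_le_iff_disj\<close>)
qed

lemma tau_ex: assumes "\<And>x. \<sigma>1 x \<le> 1" "t < fsum_S \<sigma>1 \<sigma>2 x"
  shows "\<exists>u v. x = u + v \<and> t < min (\<sigma>1 u) (\<sigma>2 v)"
proof -
  have "(x, 0) \<in> {(u, v). x = u + v}" by simp
  then have ne: "{(u, v). x = u + v} \<noteq> {}" by blast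
  have bd: "bdd_above ((\<lambda>uv. min (\<sigma>1 (fst uv)) (\<sigma>2 (snd uv))) ` {(u, v). x = u + v})"
    using assms(1) by (auto intro!: bdd_aboveI[of _ 1] simp: min_le_iff_disj)
  show ?thesis using assms(2) unfolding fsum_S_def less_cSUP_iff[OF ne bd] by auto
qed

lemma Ladd_zero: "X \<in> Lset op \<Longrightarrow> Ladd op X (Lzero op) = X"
  by (rule Lset_ev_eq[OF Ladd_L(1)[OF _ Lzero_L(1)]]) (simp_all add: Ladd_L(2)[OF _ Lzero_L(1)] Lzero_L(2))

lemma fL_upper: assumes "\<And>X. X \<in> Lset op \<Longrightarrow> \<mu>1 X \<le> 1" "X \<in> Lset op" "U \<in> Lset op" "V \<in> Lset op" "X = Ladd op U V"
  shows "min (\<mu>1 U) (\<mu>2 V) \<le> fsum_L op \<mu>1 \<mu>2 X"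
proof -
  have "min (\<mu>1 (fst (U,V))) (\<mu>2 (snd (U,V))) \<le> (SUP UV \<in> {(U, V). U \<in> Lset op \<and> V \<in> Lset op \<and> X = Ladd op U V}. min (\<mu>1 (fst UV)) (\<mu>2 (snd UV)))"
    by (rule cSUP_upper) (use assms in \<open>auto intro!: bdd_aboveI[of _ 1] simp: min_le_iff_disj\<close>)
  then show ?thesis using assms(2) by (simp add: fsum_L_def)
qed

lemma fL_least: assumes "X \<in> Lset op"
    "\<And>U V. U \<in> Lset op \<Longrightarrow> V \<in> Lset op \<Longrightarrow> X = Ladd op U V \<Longrightarrow> min (\<mu>1 U) (\<mu>2 V) \<le> t"
  shows "fsum_L op \<mu>1 \<mu>2 X \<le> t"
proof -
  have "(SUP UV \<in> {(U, V). U \<in> Lset op \<and> V \<in> Lset op \<and> X = Ladd op U V}. min (\<mu>1 (fst UV)) (\<mu>2 (snd UV))) \<le> t"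
  proof (rule cSUP_least)
    show "{(U, V). U \<in> Lset op \<and> V \<in> Lset op \<and> X = Ladd op U V} \<noteq> {}"
      using assms(1) Lzero_L(1) Ladd_zero[OF assms(1)] by auto
  qed (use assms(2) in auto)
  then show ?thesis using assms(1) by (simp add: fsum_L_def)
qed

lemma sp_fsum: assumes R1: "fuzzy_right_ideal_S op \<sigma>1" and R2: "fuzzy_right_ideal_S op \<sigma>2"
  shows "sigma_plus op (fsum_S \<sigma>1 \<sigma>2) = fsum_L op (sigma_plus op \<sigma>1) (sigma_plus op \<sigma>2)"
proof
  fix X
  let ?\<tau> = "fsum_S \<sigma>1 \<sigma>2"
  have b1: "\<And>x. 0 \<le> \<sigma>1 x" "\<And>x. \<sigma>1 x \<le> 1" "\<sigma>1 0 = 1" "\<And>x y. min (\<sigma>1 x) (\<sigma>1 y) \<le> \<sigma>1 (x+y)"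
    "\<And>x g y. \<sigma>1 x \<le> \<sigma>1 (op x g y)"
    using R1 by (auto simp: fuzzy_right_ideal_S_def)
  have b2: "\<And>x. 0 \<le> \<sigma>2 x" "\<And>x. \<sigma>2 x \<le> 1" "\<sigma>2 0 = 1" "\<And>x y. min (\<sigma>2 x) (\<sigma>2 y) \<le> \<sigma>2 (x+y)"
    "\<And>x g y. \<sigma>2 x \<le> \<sigma>2 (op x g y)"
    using R2 by (auto simp: fuzzy_right_ideal_S_def)
  have t0: "0 \<le> ?\<tau> x" for x
  proof -
    have "min (\<sigma>1 x) (\<sigma>2 0) \<le> ?\<tau> x" by (rule tau_upper[OF b1(2)]) simp
    then show ?thesis using b1(1)[of x] b2(3) by simp
  qed
  have L1: "\<And>X. X \<in> Lset op \<Longrightarrow> sigma_plus op \<sigma>1 X \<le> 1"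
    using L_b(3)[OF right_S_L[OF R1]] .
  show "sigma_plus op ?\<tau> X = fsum_L op (sigma_plus op \<sigma>1) (sigma_plus op \<sigma>2) X"
  proof (cases "X \<in> Lset op")
    case False then show ?thesis by (simp add: sp_out fsum_L_def)
  next
    case X: True
    show ?thesis
    proof (rule antisym)
      show "fsum_L op (sigma_plus op \<sigma>1) (sigma_plus op \<sigma>2) X \<le> sigma_plus op ?\<tau> X"
      proof (rule fL_least[OF X])
        fix U V assume U: "U \<in> Lset op" and V: "V \<in> Lset op" and e: "X = Ladd op U V"
        show "min (sigma_plus op \<sigma>1 U) (sigma_plus op \<sigma>2 V) \<le> sigma_plus op ?\<tau> X"
        proof (rule sp_greatest[OF X])
          fix s
          have "min (sigma_plus op \<sigma>1 U) (sigma_plus op \<sigma>2 V) \<le> min (\<sigma>1 (ev U s)) (\<sigma>2 (ev V s))"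
            using sp_lower[OF b1(1) U, where s=s] sp_lower[OF b2(1) V, where s=s] by (rule min.mono)
          also have "\<dots> \<le> ?\<tau> (ev U s + ev V s)" by (rule tau_upper[OF b1(2)]) simp
          finally show "min (sigma_plus op \<sigma>1 U) (sigma_plus op \<sigma>2 V) \<le> ?\<tau> (ev X s)"
            unfolding e Ladd_L(2)[OF U V] .
        qed
      qed
      show "sigma_plus op ?\<tau> X \<le> fsum_L op (sigma_plus op \<sigma>1) (sigma_plus op \<sigma>2) X"
      proof (rule dense_le)
        fix t assume t: "t < sigma_plus op ?\<tau> X"
        have tl: "t < ?\<tau> (ev X e)" for e using t sp_lower[where \<sigma>="?\<tau>" and s=e, OF t0 X] by linarith
        have "?\<tau> (ev X 0) \<le> 1" by (rule tau_le1[OF b1(2)])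
        then have t1: "t \<le> 1" using tl[of 0] by linarith
        have "\<forall>e. \<exists>uv. ev X e = fst uv + snd uv \<and> t < min (\<sigma>1 (fst uv)) (\<sigma>2 (snd uv))"
          using tau_ex[OF b1(2) tl] by auto
        then obtain h where hh: "\<forall>e. ev X e = fst (h e) + snd (h e) \<and> t < min (\<sigma>1 (fst (h e))) (\<sigma>2 (snd (h e)))"
          by (rule choice[THEN exE])
        have h: "\<And>e. ev X e = fst (h e) + snd (h e)" "\<And>e. t < min (\<sigma>1 (fst (h e))) (\<sigma>2 (snd (h e)))"
          using hh by blast+
        define U where "U = cls (image_mset (\<lambda>p. (fst (h (fst p)), snd p)) ME)"
        define V where "V = cls (image_mset (\<lambda>p. (snd (h (fst p)), snd p)) ME)"
        have U: "U \<in> Lset op" unfolding U_def by (rule cls_Lset[OF img_Fset[OF ME(1)]])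
        have V: "V \<in> Lset op" unfolding V_def by (rule cls_Lset[OF img_Fset[OF ME(1)]])
        have eU: "ev U = (\<lambda>s. \<Sum>p\<in>#ME. op (fst (h (fst p))) (snd p) s)" unfolding U_def by (rule ev_img[OF ME(1)])
        have eV: "ev V = (\<lambda>s. \<Sum>p\<in>#ME. op (snd (h (fst p))) (snd p) s)" unfolding V_def by (rule ev_img[OF ME(1)])
        have eX: "ev X = (\<lambda>s. \<Sum>p\<in>#ME. op (ev X (fst p)) (snd p) s)"
          by (rule trans[OF arg_cong[OF decomp[OF X], of ev] ev_img[OF ME(1)]])
        have XUV: "X = Ladd op U V"
        proof (rule Lset_ev_eq[OF X Ladd_L(1)[OF U V]])
          show "ev X = ev (Ladd op U V)"
            unfolding Ladd_L(2)[OF U V] eU eV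
          proof (rule ext)
            fix s
            have "ev X s = (\<Sum>p\<in>#ME. op (ev X (fst p)) (snd p) s)" by (rule fun_cong[OF eX])
            also have "\<dots> = (\<Sum>p\<in>#ME. op (fst (h (fst p))) (snd p) s + op (snd (h (fst p))) (snd p) s)"
              by (simp only: h(1) dL)
            also have "\<dots> = (\<Sum>p\<in>#ME. op (fst (h (fst p))) (snd p) s) + (\<Sum>p\<in>#ME. op (snd (h (fst p))) (snd p) s)"
              by (rule sum_mset.distrib)
            finally show "ev X s = (\<Sum>p\<in>#ME. op (fst (h (fst p))) (snd p) s) + (\<Sum>p\<in>#ME. op (snd (h (fst p))) (snd p) s)" .
          qed
        qed
        moreover have "t \<le> sigma_plus op \<sigma>1 U"
        proof (rule sp_greatest[OF U])
          fix s show "t \<le> \<sigma>1 (ev U s)" unfolding eU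
          proof (rule fz_summ[OF b1(4) b1(3) t1], rule ballI)
            fix p :: "'a \<times> 'g"
            have "t < \<sigma>1 (fst (h (fst p)))" using h(2)[of "fst p"] by simp
            also have "\<dots> \<le> \<sigma>1 (op (fst (h (fst p))) (snd p) s)" by (rule b1(5))
            finally show "t \<le> \<sigma>1 (op (fst (h (fst p))) (snd p) s)" by simp
          qed
        qed
        moreover have "t \<le> sigma_plus op \<sigma>2 V"
        proof (rule sp_greatest[OF V])
          fix s show "t \<le> \<sigma>2 (ev V s)" unfolding eV
          proof (rule fz_summ[OF b2(4) b2(3) t1], rule ballI)
            fix p :: "'a \<times> 'g"
            have "t < \<sigma>2 (snd (h (fst p)))" using h(2)[of "fst p"] by simp
            also have "\<dots> \<le> \<sigma>2 (op (snd (h (fst p))) (snd p) s)" by (rule b2(5))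
            finally show "t \<le> \<sigma>2 (op (snd (h (fst p))) (snd p) s)" by simp
          qed
        qed
        ultimately have "t \<le> min (sigma_plus op \<sigma>1 U) (sigma_plus op \<sigma>2 V)" by simp
        also have "\<dots> \<le> fsum_L op (sigma_plus op \<sigma>1) (sigma_plus op \<sigma>2) X"
          by (rule fL_upper[OF L1 X U V XUV])
        finally show "t \<le> fsum_L op (sigma_plus op \<sigma>1) (sigma_plus op \<sigma>2) X" .
      qed
    qed
  qed
qed

end
theorem theorem3p4:
  fixes op :: "'a::comm_monoid_add \<Rightarrow> 'g::comm_monoid_add \<Rightarrow> 'a \<Rightarrow> 'a"
  assumes "gamma_semiring_zero op"
    and "has_left_unity op"
    and "has_right_unity op"
  shows
    "bij_betw (sigma_plus op) {\<sigma>. fuzzy_ideal_S op \<sigma>} {\<mu>. fuzzy_ideal_L op \<mu>} \<and>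
     (\<forall>\<sigma>1 \<sigma>2. fuzzy_ideal_S op \<sigma>1 \<longrightarrow> fuzzy_ideal_S op \<sigma>2 \<longrightarrow>
        (\<sigma>1 \<le> \<sigma>2 \<longleftrightarrow> sigma_plus op \<sigma>1 \<le> sigma_plus op \<sigma>2) \<and>
        sigma_plus op (fsum_S \<sigma>1 \<sigma>2) = fsum_L op (sigma_plus op \<sigma>1) (sigma_plus op \<sigma>2) \<and>
        sigma_plus op (fint \<sigma>1 \<sigma>2) = fint (sigma_plus op \<sigma>1) (sigma_plus op \<sigma>2)) \<and>
     bij_betw (sigma_plus op) {\<sigma>. fuzzy_right_ideal_S op \<sigma>} {\<mu>. fuzzy_right_ideal_L op \<mu>} \<and>
     (\<forall>\<sigma>1 \<sigma>2. fuzzy_right_ideal_S op \<sigma>1 \<longrightarrow> fuzzy_right_ideal_S op \<sigma>2 \<longrightarrow>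
        (\<sigma>1 \<le> \<sigma>2 \<longleftrightarrow> sigma_plus op \<sigma>1 \<le> sigma_plus op \<sigma>2) \<and>
        sigma_plus op (fsum_S \<sigma>1 \<sigma>2) = fsum_L op (sigma_plus op \<sigma>1) (sigma_plus op \<sigma>2) \<and>
        sigma_plus op (fint \<sigma>1 \<sigma>2) = fint (sigma_plus op \<sigma>1) (sigma_plus op \<sigma>2))"
proof -
  interpret gsz op by (rule gsz.intro[OF assms(1)])
  obtain E where E: "E \<in> Lset op" "\<forall>M\<in>E. \<forall>a. opeval op M a = a"
    using assms(2) unfolding has_left_unity_def by blast
  obtain ME where ME: "ME \<in> Fset" "E = cls ME" using E(1) by (auto simp: Lset_iff)
  have "ME \<in> E" using ME by (simp add: mem_cls)
  then have MEid: "\<And>a. opeval op ME a = a" using E(2) by blast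
  interpret gszu op ME by (rule gszu.intro[OF gsz_axioms], unfold_locales) (use ME MEid in auto)
  obtain fs :: "('g \<times> 'a) list" where fs: "\<And>a. (\<Sum>p\<leftarrow>fs. op a (fst p) (snd p)) = a"
    using assms(3) unfolding has_right_unity_def by blast
  have Rprops: "\<And>\<sigma>1 \<sigma>2. fuzzy_right_ideal_S op \<sigma>1 \<Longrightarrow> fuzzy_right_ideal_S op \<sigma>2 \<Longrightarrow>
        (\<sigma>1 \<le> \<sigma>2 \<longleftrightarrow> sigma_plus op \<sigma>1 \<le> sigma_plus op \<sigma>2) \<and>
        sigma_plus op (fsum_S \<sigma>1 \<sigma>2) = fsum_L op (sigma_plus op \<sigma>1) (sigma_plus op \<sigma>2) \<and>
        sigma_plus op (fint \<sigma>1 \<sigma>2) = fint (sigma_plus op \<sigma>1) (sigma_plus op \<sigma>2)"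
  proof -
    fix \<sigma>1 \<sigma>2 assume R1: "fuzzy_right_ideal_S op \<sigma>1" and R2: "fuzzy_right_ideal_S op \<sigma>2"
    have p1: "\<And>x. 0 \<le> \<sigma>1 x" using R1 by (simp add: fuzzy_right_ideal_S_def)
    have p2: "\<And>x. 0 \<le> \<sigma>2 x" using R2 by (simp add: fuzzy_right_ideal_S_def)
    have "\<sigma>1 \<le> \<sigma>2" if "sigma_plus op \<sigma>1 \<le> sigma_plus op \<sigma>2"
    proof -
      have "Ginv (sigma_plus op \<sigma>1) \<le> Ginv (sigma_plus op \<sigma>2)"
        by (rule Ginv_mono[OF right_S_L[OF R1] that])
      then show ?thesis using Ginv_sp[OF R1 fs] Ginv_sp[OF R2 fs] by simp
    qed
    then show "(\<sigma>1 \<le> \<sigma>2 \<longleftrightarrow> sigma_plus op \<sigma>1 \<le> sigma_plus op \<sigma>2) \<and>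
        sigma_plus op (fsum_S \<sigma>1 \<sigma>2) = fsum_L op (sigma_plus op \<sigma>1) (sigma_plus op \<sigma>2) \<and>
        sigma_plus op (fint \<sigma>1 \<sigma>2) = fint (sigma_plus op \<sigma>1) (sigma_plus op \<sigma>2)"
      using sp_mono[of \<sigma>1 \<sigma>2, OF p1] sp_fsum[OF R1 R2] sp_fint[of \<sigma>1 \<sigma>2, OF p1 p2] by blast
  qed
  have bijR: "bij_betw (sigma_plus op) {\<sigma>. fuzzy_right_ideal_S op \<sigma>} {\<mu>. fuzzy_right_ideal_L op \<mu>}"
    by (rule bij_betw_byWitness[where f'=Ginv]) (auto simp: Ginv_sp[OF _ fs] sp_Ginv right_S_L Ginv_right)
  have bijI: "bij_betw (sigma_plus op) {\<sigma>. fuzzy_ideal_S op \<sigma>} {\<mu>. fuzzy_ideal_L op \<mu>}"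
    by (rule bij_betw_byWitness[where f'=Ginv])
       (auto simp: fuzzy_ideal_S_def fuzzy_ideal_L_def Ginv_sp[OF _ fs] sp_Ginv right_S_L left_S_L Ginv_right Ginv_left)
  show ?thesis using bijR bijI Rprops unfolding fuzzy_ideal_S_def by blast
qed

end
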